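(* Let $k_0$ be a field with $\operatorname{char}k_0\neq3$. Let $T\subset E_6^{\mathrm{ad}}$ be a split maximal torus with root system $\Phi\subset X(T)$ and Weyl group $W$. There exists a surjective homomorphism $\varepsilon:X(T)\to\mathbb{F}_3^2$ such that $\varepsilon(\alpha)\neq0$ for all $\alpha\in\Phi$, $X(T)^{W(\varepsilon)_3}=\{0\}$ for a Sylow $3$-subgroup $W(\varepsilon)_3$ of $W(\varepsilon)$, and $\operatorname{Rank}(W(\varepsilon),X(T);3)\geq12$.
   Context: $E_6^{\mathrm{ad}}$ is the split adjoint group of type $E_6$ over $k_0$. $W(\varepsilon)=\{w\in W:\varepsilon(w.\chi)=\varepsilon(\chi)\ \forall\chi\in X(T)\}$. For a finite group $S$ acting on a finitely generated abelian group $\mathcal{U}$ with Sylow $p$-subgroup $S_p$, $\operatorname{Rank}(S,\mathcal{U};p)$ is the minimal size of an $S_p$-invariant subset of $\mathcal{U}$ generating a subgroup of finite index prime to $p$. *)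

theory Defs
  imports "HOL-Analysis.Analysis"
begin

text \<open>For the split adjoint group E6 the character lattice X(T) is the root lattice.
  We identify X(T) with int^6 using the basis of simple roots alpha_1,...,alpha_6
  (Bourbaki numbering 1..6 mapped to indices 0..5 of the type 6).\<close>

type_synonym charlat = "int ^ 6"
type_synonym weylmat = "int ^ 6 ^ 6"

definition idx :: "6 \<Rightarrow> nat" where
  "idx i = nat (Rep_bit0 i)"

text \<open>Cartan matrix of E6, Bourbaki labelling: Dynkin edges 1-3, 3-4, 4-5, 5-6, 2-4.
  In 0-based indices: 0-2, 2-3, 3-4, 4-5, 1-3.\<close>
definition e6_edge :: "nat \<Rightarrow> nat \<Rightarrow> bool" where
  "e6_edge a b \<longleftrightarrow> {a, b} \<in> {{0,2}, {2,3}, {3,4}, {4,5}, {1,3}}"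

definition cartan :: "6 \<Rightarrow> 6 \<Rightarrow> int" where
  "cartan i j = (if i = j then 2 else if e6_edge (idx i) (idx j) then -1 else 0)"

definition simple_root :: "6 \<Rightarrow> charlat" where
  "simple_root i = axis i 1"

text \<open>Simple reflection s_i(x) = x - <x, alpha_i^vee> alpha_i, as an integer matrix
  in the simple-root basis.\<close>
definition simple_refl :: "6 \<Rightarrow> weylmat" where
  "simple_refl i = (\<chi> k j. (if k = j then 1 else 0) - (if k = i then cartan j i else 0))"

inductive_set weyl_group :: "weylmat set" where
  one: "mat 1 \<in> weyl_group"
| step: "w \<in> weyl_group \<Longrightarrow> simple_refl i ** w \<in> weyl_group"

definition roots :: "charlat set" where
  "roots = {w *v simple_root i | w i. w \<in> weyl_group}"

definition W_eps :: "(charlat \<Rightarrow> 'b) \<Rightarrow> weylmat set" where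
  "W_eps eps = {w \<in> weyl_group. \<forall>x. eps (w *v x) = eps x}"

definition is_subgroup :: "(int ^ 'a::finite ^ 'a) set \<Rightarrow> (int ^ 'a::finite ^ 'a) set \<Rightarrow> bool" where
  "is_subgroup P S \<longleftrightarrow> P \<subseteq> S \<and> mat 1 \<in> P \<and> (\<forall>a\<in>P. \<forall>b\<in>P. a ** b \<in> P)
     \<and> (\<forall>a\<in>P. \<exists>b\<in>P. a ** b = mat 1 \<and> b ** a = mat 1)"

definition sylow :: "nat \<Rightarrow> (int ^ 'a::finite ^ 'a) set \<Rightarrow> (int ^ 'a ^ 'a) set \<Rightarrow> bool" where
  "sylow p S P \<longleftrightarrow> is_subgroup P S \<and> card P = p ^ multiplicity p (card S)"

definition fixed_pts :: "(int ^ 'a ^ 'a) set \<Rightarrow> (int ^ 'a::finite) set" where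
  "fixed_pts P = {x. \<forall>w\<in>P. w *v x = x}"

definition gen_subgroup :: "(int ^ 'a::finite) set \<Rightarrow> (int ^ 'a) set" where
  "gen_subgroup A = {x. \<exists>c. x = (\<Sum>a\<in>A. c a *s a)}"

definition cosets :: "(int ^ 'a::finite) set \<Rightarrow> (int ^ 'a) set set" where
  "cosets L = range (\<lambda>x. (\<lambda>l. x + l) ` L)"

definition finite_index_prime_to :: "nat \<Rightarrow> (int ^ 'a::finite) set \<Rightarrow> bool" where
  "finite_index_prime_to p L \<longleftrightarrow> finite (cosets L) \<and> \<not> p dvd card (cosets L)"

text \<open>Rank(S, U; p) for S acting on U = int^n by matrices, with respect to a Sylow
  p-subgroup Sp: the minimal size of an Sp-invariant subset of U generating a
  subgroup of finite index prime to p.\<close>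
definition invariant_gen_set :: "nat \<Rightarrow> (int ^ 'a ^ 'a) set \<Rightarrow> (int ^ 'a::finite) set \<Rightarrow> bool" where
  "invariant_gen_set p Sp A \<longleftrightarrow> finite A \<and> (\<forall>w\<in>Sp. \<forall>a\<in>A. w *v a \<in> A)
      \<and> finite_index_prime_to p (gen_subgroup A)"

definition Rank :: "nat \<Rightarrow> (int ^ 'a ^ 'a) set \<Rightarrow> (int ^ 'a::finite ^ 'a) set \<Rightarrow> nat" where
  "Rank p S Sp = (LEAST n. \<exists>A :: (int ^ 'a) set. invariant_gen_set p Sp A \<and> card A = n)"

end

theory Submission
  imports Defs
begin


lemma idx_simps[simp]: "idx 0 = 0" "idx 1 = 1" "idx 2 = 2" "idx 3 = 3" "idx 4 = 4" "idx 5 = 5"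
  by (simp_all add: idx_def bit0.Rep_numeral bit0.Rep_0 bit0.Rep_1)

lemma UNIV_6: "(UNIV::6 set) = {0,1,2,3,4,5}"
proof -
  have "\<And>x::6. x \<in> {0,1,2,3,4,5}"
  proof -
    fix x :: 6
    show "x \<in> {0,1,2,3,4,5}"
    proof (induct x)
      case (of_int z)
      then have "z = 0 \<or> z = 1 \<or> z = 2 \<or> z = 3 \<or> z = 4 \<or> z = 5" by auto
      then show ?case by auto
    qed
  qed
  then show ?thesis by auto
qed

lemma forall_6: "(\<forall>i::6. P i) \<longleftrightarrow> P 0 \<and> P 1 \<and> P 2 \<and> P 3 \<and> P 4 \<and> P 5"
proof -
  have "(\<forall>i::6. P i) \<longleftrightarrow> (\<forall>i\<in>UNIV. P i)" by simp
  also have "\<dots> \<longleftrightarrow> P 0 \<and> P 1 \<and> P 2 \<and> P 3 \<and> P 4 \<and> P 5" unfolding UNIV_6 by simp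
  finally show ?thesis .
qed


lemma sum6: "(\<Sum>i\<in>(UNIV::6 set). f i) = f 0 + f 1 + f 2 + f 3 + f 4 + f 5"
  unfolding UNIV_6 by (simp add: add.assoc)
definition cmat :: "int list list" where
  "cmat = [[2,0,-1,0,0,0],[0,2,0,-1,0,0],[-1,0,2,-1,0,0],[0,-1,-1,2,-1,0],[0,0,0,-1,2,-1],[0,0,0,0,-1,2]]"

lemma e6_edge_simps: "e6_edge a b \<longleftrightarrow> (a,b) \<in> {(0,2),(2,0),(2,3),(3,2),(3,4),(4,3),(4,5),(5,4),(1,3),(3,1)}"
  unfolding e6_edge_def by (auto simp: doubleton_eq_iff)

lemma cartan_cmat_all: "\<forall>i j. cartan i j = cmat ! idx i ! idx j"
  unfolding forall_6 by (simp add: cartan_def e6_edge_simps cmat_def)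

lemma cartan_cmat: "cartan i j = cmat ! idx i ! idx j"
  using cartan_cmat_all by blast
definition vec6 :: "int list \<Rightarrow> int^6" where
  "vec6 xs = (\<chi> k. xs ! idx k)"

definition l6 :: "int^6 \<Rightarrow> int list" where
  "l6 x = [x$0, x$1, x$2, x$3, x$4, x$5]"

lemma vec6_l6[simp]: "vec6 (l6 x) = x"
  unfolding vec_eq_iff forall_6 by (simp add: vec6_def l6_def)

lemma length6_cases: "length xs = 6 \<Longrightarrow> \<exists>a b c d e f. xs = [a,b,c,d,e,f]"
  by (cases xs; simp; rename_tac l1; case_tac l1; simp; rename_tac l2; case_tac l2; simp;
      rename_tac l3; case_tac l3; simp; rename_tac l4; case_tac l4; simp; rename_tac l5; case_tac l5; simp;
      rename_tac l6; case_tac l6; simp)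

lemma l6_vec6: "length xs = 6 \<Longrightarrow> l6 (vec6 xs) = xs"
  by (drule length6_cases) (auto simp: vec6_def l6_def)

lemma length_l6[simp]: "length (l6 x) = 6"
  by (simp add: l6_def)

definition lrefl :: "nat \<Rightarrow> int list \<Rightarrow> int list" where
  "lrefl i xs = xs[i := xs!i - sum_list (map2 (*) (cmat!i) xs)]"

lemma length_lrefl[simp]: "length (lrefl i xs) = length xs"
  by (simp add: lrefl_def)

lemma sum_lt6: "(\<Sum>j<(6::nat). f j) = f 0 + f 1 + f 2 + f 3 + f 4 + (f 5 :: int)"
  by (simp add: numeral_eq_Suc lessThan_Suc)

lemma l6_refl_all: "\<forall>i. l6 (simple_refl i *v x) = lrefl (idx i) (l6 x)"
  unfolding forall_6
  by (simp add: l6_def lrefl_def matrix_vector_mult_def sum6 sum_lt6 simple_refl_def cartan_cmat cmat_def)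

lemma l6_refl: "l6 (simple_refl i *v x) = lrefl (idx i) (l6 x)"
  using l6_refl_all by blast
definition Rl :: "int list list" where
  "Rl = [[-1,-2,-2,-3,-2,-1],
    [-1,-1,-2,-3,-2,-1],
    [-1,-1,-2,-2,-2,-1],
    [-1,-1,-2,-2,-1,-1],
    [-1,-1,-2,-2,-1,0],
    [-1,-1,-1,-2,-2,-1],
    [-1,-1,-1,-2,-1,-1],
    [-1,-1,-1,-2,-1,0],
    [-1,-1,-1,-1,-1,-1],
    [-1,-1,-1,-1,-1,0],
    [-1,-1,-1,-1,0,0],
    [-1,0,-1,-1,-1,-1],
    [-1,0,-1,-1,-1,0],
    [-1,0,-1,-1,0,0],
    [-1,0,-1,0,0,0],
    [-1,0,0,0,0,0],
    [0,-1,-1,-2,-2,-1],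
    [0,-1,-1,-2,-1,-1],
    [0,-1,-1,-2,-1,0],
    [0,-1,-1,-1,-1,-1],
    [0,-1,-1,-1,-1,0],
    [0,-1,-1,-1,0,0],
    [0,-1,0,-1,-1,-1],
    [0,-1,0,-1,-1,0],
    [0,-1,0,-1,0,0],
    [0,-1,0,0,0,0],
    [0,0,-1,-1,-1,-1],
    [0,0,-1,-1,-1,0],
    [0,0,-1,-1,0,0],
    [0,0,-1,0,0,0],
    [0,0,0,-1,-1,-1],
    [0,0,0,-1,-1,0],
    [0,0,0,-1,0,0],
    [0,0,0,0,-1,-1],
    [0,0,0,0,-1,0],
    [0,0,0,0,0,-1],
    [0,0,0,0,0,1],
    [0,0,0,0,1,0],
    [0,0,0,0,1,1],
    [0,0,0,1,0,0],
    [0,0,0,1,1,0],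
    [0,0,0,1,1,1],
    [0,0,1,0,0,0],
    [0,0,1,1,0,0],
    [0,0,1,1,1,0],
    [0,0,1,1,1,1],
    [0,1,0,0,0,0],
    [0,1,0,1,0,0],
    [0,1,0,1,1,0],
    [0,1,0,1,1,1],
    [0,1,1,1,0,0],
    [0,1,1,1,1,0],
    [0,1,1,1,1,1],
    [0,1,1,2,1,0],
    [0,1,1,2,1,1],
    [0,1,1,2,2,1],
    [1,0,0,0,0,0],
    [1,0,1,0,0,0],
    [1,0,1,1,0,0],
    [1,0,1,1,1,0],
    [1,0,1,1,1,1],
    [1,1,1,1,0,0],
    [1,1,1,1,1,0],
    [1,1,1,1,1,1],
    [1,1,1,2,1,0],
    [1,1,1,2,1,1],
    [1,1,1,2,2,1],
    [1,1,2,2,1,0],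
    [1,1,2,2,1,1],
    [1,1,2,2,2,1],
    [1,1,2,3,2,1],
    [1,2,2,3,2,1]]"

definition Words :: "nat list list" where
  "Words = [[4,2,3,0,2,1,3,4,5,0,2,3,4,1,3,2,1,0],
    [3,0,2,1,3,4,5,0,2,1,3,4,1,3,2,0],
    [5,4,3,2,1,3,4,5,0,2,3,4,1,3,2,0],
    [4,5,3,4,2,3,0,2,1,3,4,5,4,3,2,1,3,4,0,2,3,2,1,0],
    [5,4,2,0],
    [1,3,4,2,3,0,2,1,3,4,5,4,3,2,1,3,4,0,2,3,2,0],
    [2,3,4,5,1,3,4,2,3,0,2,1,3,4,5,2,1,0],
    [0,2,3,4,5,1,3,4,2,3,0,2,1,3,2,0],
    [1,3,4,5,1,3,4,2,3,0,2,1,3,4,2,0],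
    [2,1,3,4,5,1,3,4,2,3,0,2,1,3,4,1],
    [0,2,3,4,5,1,3,4,2,3,0,2,1,3,4,5],
    [3,4,5,1,3,4,2,3,0,2,1,3],
    [2,3,4,5,1,3,4,2,3,0,2,1,3,0,2,1],
    [0,2,1,3,4,5,1,3,4,2,3,0,2,1,3,4,0,2],
    [3,4,5,1,3,4,2,3,0,2,1,3,4,5,0,2],
    [3,4,2,3,0,2,1,3,4,5,4,3,2,1,3,4,0,2,3,0,2,1],
    [4,5,0,2],
    [5,1,3,4,2,3,0,2,1,3,4,5,4,3,0,2,1,3,4,0,2,3,0,2],
    [4,3,0,2,1,3,4,5,0,2,1,3,4,1,3,1],
    [3,2,1,3,4,5,0,2,3,4,1,3],
    [5,4,2,3,0,2,1,3,4,5,0,2,3,4,1,3],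
    [5,3,4,2,3,0,2,1,3,4,5,4,3,0,2,1,3,4,0,2,3,1],
    [],
    [4,5,1,3,4,2,3,0,2,1,3,4,5,4,3,2,1,3,4,0,2,3],
    [4,3,2,1,3,4,5,0,2,3,4,1,3,0,2,1],
    [2,3,0,2,1,3,4,5,0,2,3,4,1,3,0,2],
    [5,4,3,0,2,1,3,4,5,0,2,1,3,4,1,3,0,2]]"

lemma Rl_closed_list: "list_all (\<lambda>i. list_all (\<lambda>r. lrefl i r \<in> set Rl) Rl) [0..<6]"
  by code_simp

lemma Rl_len_list: "list_all (\<lambda>r. length r = 6) Rl"
  by code_simp

lemma Rl_closed: "i < 6 \<Longrightarrow> r \<in> set Rl \<Longrightarrow> lrefl i r \<in> set Rl"
  using Rl_closed_list by (simp add: list_all_iff)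

lemma Rl_len: "r \<in> set Rl \<Longrightarrow> length r = 6"
  using Rl_len_list by (simp add: list_all_iff)


lemma idx_lt6: "idx i < 6"
  using bit0.Rep_less_n[of i] by (simp add: idx_def)

lemma lt6_set: "{..<6::nat} = {0,1,2,3,4,5}"
  by (simp add: lessThan_Suc numeral_eq_Suc insert_commute)

lemma all_less_6: "(\<forall>i<(6::nat). P i) \<longleftrightarrow> P 0 \<and> P 1 \<and> P 2 \<and> P 3 \<and> P 4 \<and> P 5"
proof -
  have "(\<forall>i<(6::nat). P i) \<longleftrightarrow> (\<forall>i\<in>{..<6}. P i)" by auto
  also have "\<dots> \<longleftrightarrow> P 0 \<and> P 1 \<and> P 2 \<and> P 3 \<and> P 4 \<and> P 5" unfolding lt6_set by simp
  finally show ?thesis .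
qed

lemma idx_of_nat_all: "\<forall>i<6. idx (of_nat i) = i"
  unfolding all_less_6 by simp

lemma idx_of_nat: "i < 6 \<Longrightarrow> idx (of_nat i) = i"
  using idx_of_nat_all by blast
lemma forall_2: "(\<forall>i::2. P i) \<longleftrightarrow> P 0 \<and> P 1"
proof -
  have "\<And>x::2. x \<in> {0,1}"
  proof -
    fix x :: 2
    show "x \<in> {0,1}"
    proof (induct x)
      case (of_int z)
      then have "z = 0 \<or> z = 1" by auto
      then show ?case by auto
    qed
  qed
  then have U: "(UNIV::2 set) = {0,1}" by auto
  have "(\<forall>i::2. P i) \<longleftrightarrow> (\<forall>i\<in>UNIV. P i)" by simp
  also have "\<dots> \<longleftrightarrow> P 0 \<and> P 1" unfolding U by simp
  finally show ?thesis .
qed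

definition E6l :: "int list list" where
  "E6l = [[1,0,0,0,0,0],[0,1,0,0,0,0],[0,0,1,0,0,0],[0,0,0,1,0,0],[0,0,0,0,1,0],[0,0,0,0,0,1]]"

lemma l6_axis_all: "\<forall>j::6. l6 (axis j 1) = E6l ! idx j"
  unfolding forall_6 by (simp add: l6_def axis_def E6l_def)

lemma mv_axis: "(A *v axis j 1) $ k = A $ k $ (j::'n::finite)"
  by (simp add: matrix_vector_mult_def axis_def if_distrib if_distribR cong: if_cong)

definition cl :: "int^6^6 \<Rightarrow> int list list" where
  "cl w = map (\<lambda>j. l6 (w *v axis j 1)) [0,1,2,3,4,5]"

lemma length_cl[simp]: "length (cl w) = 6"
  by (simp add: cl_def)

lemma cl_one: "cl (mat 1) = E6l"
  by (simp add: cl_def l6_axis_all[rule_format] E6l_def)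

lemma cl_step: "cl (simple_refl i ** w) = map (lrefl (idx i)) (cl w)"
  by (simp add: cl_def matrix_vector_mul_assoc[symmetric] l6_refl)

lemma l6_nth_all: "\<forall>k::6. l6 y ! idx k = y $ k"
  unfolding forall_6 by (simp add: l6_def)

lemma entry: "w $ k $ j = cl w ! idx j ! idx k"
proof -
  have "\<forall>j::6. cl w ! idx j = l6 (w *v axis j 1)"
    unfolding forall_6 by (simp add: cl_def)
  then show ?thesis by (simp add: l6_nth_all mv_axis)
qed

lemma cl_inj: "cl w = cl w' \<Longrightarrow> w = w'"
  by (simp add: vec_eq_iff entry[of w] entry[of w'])

definition f1 :: "int^6 \<Rightarrow> int" where "f1 x = x$3"
definition f2 :: "int^6 \<Rightarrow> int" where "f2 x = x$0 + x$1 + x$2 + x$4 + x$5"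
definition Fm :: "int^6 \<Rightarrow> int \<times> int" where "Fm x = (f1 x mod 3, f2 x mod 3)"
definition eps0 :: "int^6 \<Rightarrow> 3^2" where
  "eps0 x = (\<chi> k. if k = 0 then of_int (f1 x) else of_int (f2 x))"
definition epsl :: "int list \<Rightarrow> int \<times> int" where
  "epsl l = (l!3 mod 3, (l!0+l!1+l!2+l!4+l!5) mod 3)"

lemma Fm_epsl: "Fm x = epsl (l6 x)"
  by (simp add: Fm_def epsl_def l6_def f1_def f2_def)

lemma Rep3: "Rep_bit1 (of_int a :: 3) = a mod 3"
proof -
  have "Rep_bit1 (of_int a :: 3) = a mod int CARD(3)"
    by (simp only: bit1.of_int_eq bit1.Rep_Abs_mod)
  then show ?thesis by simp
qed

lemma of3: "(of_int a :: 3) = of_int b \<longleftrightarrow> a mod 3 = b mod 3"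
  by (metis Rep3 Rep_bit1_inject)

lemma eps0_eq: "eps0 x = eps0 y \<longleftrightarrow> Fm x = Fm y"
  unfolding vec_eq_iff forall_2 by (simp add: eps0_def Fm_def of3)

lemma f1_add: "f1 (x + y) = f1 x + f1 y" by (simp add: f1_def)
lemma f2_add: "f2 (x + y) = f2 x + f2 y" by (simp add: f2_def)

lemma eps0_add: "eps0 (x + y) = eps0 x + eps0 y"
  unfolding vec_eq_iff forall_2 by (simp add: eps0_def f1_add f2_add)

lemma eps0_zero: "eps0 0 = 0"
  unfolding vec_eq_iff forall_2 by (simp add: eps0_def f1_def f2_def)

lemma eps0_surj: "surj eps0"
unfolding surj_def
proof
  fix v :: "3^2"
  obtain a where a: "v$0 = of_int a" using bit1.cases[of "v$0"] by metis
  obtain b where b: "v$1 = of_int b" using bit1.cases[of "v$1"] by metis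
  let ?x = "a *s axis 3 1 + b *s axis 0 1 :: int^6"
  have "f1 ?x = a" by (simp add: f1_def axis_def)
  moreover have "f2 ?x = b" by (simp add: f2_def axis_def)
  ultimately have "v = eps0 ?x"
    unfolding vec_eq_iff forall_2 by (simp add: eps0_def a b)
  then show "\<exists>x. v = eps0 x" by blast
qed

definition lB :: "int list \<Rightarrow> int list \<Rightarrow> int" where
  "lB a b = sum_list (map2 (*) a (map (\<lambda>row. sum_list (map2 (*) row b)) cmat))"

lemma lt6_cases: "i < (6::nat) \<Longrightarrow> i = 0 \<or> i = 1 \<or> i = 2 \<or> i = 3 \<or> i = 4 \<or> i = 5"
  by auto

lemma lB_refl: "length a = 6 \<Longrightarrow> length b = 6 \<Longrightarrow> i < 6 \<Longrightarrow> lB (lrefl i a) (lrefl i b) = lB a b"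
  apply (drule length6_cases)+
  apply (drule lt6_cases)
  apply (elim exE disjE)
  apply (simp_all add: lB_def lrefl_def cmat_def algebra_simps)
  done

definition gram_ok :: "int list list \<Rightarrow> nat \<Rightarrow> int list \<Rightarrow> bool" where
  "gram_ok p j c = list_all (\<lambda>i. lB (p!i) c = cmat!i!j) [0..<length p]"

definition Cand :: "nat \<Rightarrow> int list list" where
  "Cand j = filter (\<lambda>r. epsl r = epsl (E6l!j)) Rl"

definition stepS :: "nat \<Rightarrow> int list list list \<Rightarrow> int list list list" where
  "stepS j ps = concat (map (\<lambda>p. map (\<lambda>c. p @ [c]) (filter (gram_ok p j) (Cand j))) ps)"

fun build :: "nat \<Rightarrow> int list list list" where
  "build 0 = [[]]"
| "build (Suc j) = stepS j (build j)"

definition v0l :: "int list" where "v0l = [4,3,5,6,4,2]"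

definition v0ok :: "int list list \<Rightarrow> bool" where
  "v0ok rs = list_all (\<lambda>k. (sum_list (map2 (\<lambda>v r. v * r!k) v0l rs)) mod 3 = v0l!k mod 3) [0,1,2,3,4,5]"

definition final :: "int list list list" where
  "final = filter v0ok (build 6)"

fun lword :: "nat list \<Rightarrow> int list \<Rightarrow> int list" where
  "lword [] x = x"
| "lword (i#ws) x = lrefl i (lword ws x)"

lemma lword_Nil_fun[simp]: "lword [] = (\<lambda>x. x)"
  by (rule ext) simp

definition colsOf :: "nat list \<Rightarrow> int list list" where
  "colsOf ws = map (lword ws) E6l"

lemma final_eq: "final = map colsOf Words"
  by code_simp

fun wordmat :: "nat list \<Rightarrow> int^6^6" where
  "wordmat [] = mat 1"
| "wordmat (i#ws) = simple_refl (of_nat i) ** wordmat ws"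

lemma wordmat_W: "wordmat ws \<in> weyl_group"
  by (induction ws) (auto intro: weyl_group.intros)

lemma Words_lt6: "list_all (list_all (\<lambda>i. i < 6)) Words"
  by code_simp

lemma cl_wordmat: "list_all (\<lambda>i. i < 6) ws \<Longrightarrow> cl (wordmat ws) = colsOf ws"
proof (induction ws)
  case Nil
  then show ?case by (simp add: cl_one colsOf_def)
next
  case (Cons i ws)
  then show ?case by (simp add: cl_step idx_of_nat colsOf_def)
qed

definition v0v :: "int^6" where "v0v = vec6 v0l"

lemma l6_inj: "l6 x = l6 y \<Longrightarrow> x = y"
  by (metis vec6_l6)

lemma mv_smult: "A *v (c *s x) = c *s (A *v (x :: int^'n))"
  by (simp add: vec_eq_iff matrix_vector_mult_def sum_distrib_left mult_ac)

lemma refl_v0_all: "\<forall>i. simple_refl i *v v0v = v0v + 3 *s (if i = 0 then - axis 0 1 else 0)"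
proof -
  have "\<forall>i. l6 (simple_refl i *v v0v) = l6 (v0v + 3 *s (if i = 0 then - axis 0 1 else 0))"
    unfolding l6_refl forall_6
    by (simp add: v0v_def l6_vec6 v0l_def lrefl_def cmat_def l6_def vec6_def axis_def)
  then show ?thesis using l6_inj by blast
qed

lemma E6l_Rl: "set E6l \<subseteq> set Rl"
  by code_simp

lemma E6l_gram: "\<forall>i<6. \<forall>j<6. lB (E6l!i) (E6l!j) = cmat!i!j"
  unfolding all_less_6 by (simp add: E6l_def lB_def cmat_def)

lemma W_inv:
  assumes "w \<in> weyl_group"
  shows "set (cl w) \<subseteq> set Rl \<and> (\<forall>i<6. \<forall>j<6. lB (cl w!i) (cl w!j) = cmat!i!j)
         \<and> (\<exists>u. w *v v0v = v0v + 3 *s u)"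
  using assms
proof (induction rule: weyl_group.induct)
  case one
  show ?case using E6l_Rl E6l_gram
    by (auto simp: cl_one intro: exI[of _ 0])
next
  case (step w i)
  then have IH1: "set (cl w) \<subseteq> set Rl" and IH2: "\<forall>i<6. \<forall>j<6. lB (cl w!i) (cl w!j) = cmat!i!j"
    and IH3: "\<exists>u. w *v v0v = v0v + 3 *s u" by blast+
  have 1: "set (cl (simple_refl i ** w)) \<subseteq> set Rl"
    using IH1 Rl_closed idx_lt6 by (auto simp: cl_step)
  have 2: "\<forall>a<6. \<forall>b<6. lB (cl (simple_refl i ** w)!a) (cl (simple_refl i ** w)!b) = cmat!a!b"
  proof (intro allI impI)
    fix a b :: nat assume a: "a < 6" and b: "b < 6"
    have "cl w ! a \<in> set Rl" using IH1 a by (metis length_cl nth_mem subsetD)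
    then have la: "length (cl w ! a) = 6" by (rule Rl_len)
    have "cl w ! b \<in> set Rl" using IH1 b by (metis length_cl nth_mem subsetD)
    then have lb: "length (cl w ! b) = 6" by (rule Rl_len)
    show "lB (cl (simple_refl i ** w)!a) (cl (simple_refl i ** w)!b) = cmat!a!b"
      using a b la lb IH2 lB_refl[OF la lb idx_lt6] by (simp add: cl_step)
  qed
  obtain u where u: "w *v v0v = v0v + 3 *s u" using IH3 by blast
  have "(simple_refl i ** w) *v v0v = simple_refl i *v (v0v + 3 *s u)"
    by (simp add: matrix_vector_mul_assoc[symmetric] u)
  also have "\<dots> = v0v + 3 *s ((if i = 0 then - axis 0 1 else 0) + simple_refl i *v u)"
    by (simp add: matrix_vector_right_distrib mv_smult refl_v0_all[rule_format] vector_add_ldistrib add.assoc)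
  finally have 3: "\<exists>u. (simple_refl i ** w) *v v0v = v0v + 3 *s u" by blast
  show ?case using 1 2 3 by blast
qed

lemma take_build:
  "n \<le> length rs \<Longrightarrow> (\<forall>j<n. rs!j \<in> set Rl \<and> epsl (rs!j) = epsl (E6l!j) \<and> (\<forall>i<j. lB (rs!i) (rs!j) = cmat!i!j))
   \<Longrightarrow> take n rs \<in> set (build n)"
proof (induction n)
  case 0
  then show ?case by simp
next
  case (Suc n)
  then have n: "n < length rs" by simp
  have IH: "take n rs \<in> set (build n)" using Suc by simp
  have c: "rs!n \<in> set (Cand n)" using Suc.prems by (simp add: Cand_def)
  have g: "gram_ok (take n rs) n (rs!n)" using Suc.prems n by (simp add: gram_ok_def list_all_iff)
  have "take (Suc n) rs = take n rs @ [rs!n]" using n by (simp add: take_Suc_conv_app_nth)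
  then show ?case using IH c g by (auto simp: stepS_def)
qed

lemma Weps_final: assumes "w \<in> W_eps eps0" shows "cl w \<in> set final"
proof -
  have wW: "w \<in> weyl_group" and inv: "\<forall>x. eps0 (w *v x) = eps0 x" using assms by (auto simp: W_eps_def)
  note I = W_inv[OF wW]
  have Fj: "\<forall>j::6. Fm (w *v axis j 1) = Fm (axis j 1)" using inv eps0_eq by blast
  have e: "\<forall>j<6. epsl (cl w ! j) = epsl (E6l ! j)"
    using Fj unfolding all_less_6 forall_6 by (simp add: cl_def Fm_epsl l6_axis_all[rule_format])
  have r: "\<forall>j<6. cl w ! j \<in> set Rl" using I by (metis length_cl nth_mem subsetD)
  have "take 6 (cl w) \<in> set (build 6)"
    by (rule take_build) (use I e r in auto)
  then have b: "cl w \<in> set (build 6)" by simp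
  obtain u where u: "w *v v0v = v0v + 3 *s u" using I by blast
  have "\<forall>k::6. (w *v v0v)$k = (v0v + 3 *s u)$k" using u by simp
  then have E: "\<forall>k::6. w$k$0*4 + w$k$1*3 + w$k$2*5 + w$k$3*6 + w$k$4*4 + w$k$5*2 = v0l!idx k + 3*u$k"
    by (simp add: matrix_vector_mult_def sum6 v0v_def vec6_def v0l_def)
  have "v0ok (cl w)"
    using E unfolding forall_6
    apply (simp add: v0ok_def cl_def v0l_def l6_def mv_axis)
    apply presburger
    done
  then show ?thesis using b by (simp add: final_def)
qed

lemma mod_lin:
  fixes a b x :: "'i \<Rightarrow> int"
  assumes "finite S" "\<forall>j\<in>S. a j mod m = b j mod m"
  shows "(\<Sum>j\<in>S. a j * x j) mod m = (\<Sum>j\<in>S. b j * x j) mod m"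
proof -
  have "(\<Sum>j\<in>S. a j * x j) mod m = (\<Sum>j\<in>S. (a j * x j) mod m) mod m" by (simp add: mod_sum_eq)
  also have "\<dots> = (\<Sum>j\<in>S. ((a j mod m) * x j) mod m) mod m" by (simp add: mod_mult_left_eq)
  also have "\<dots> = (\<Sum>j\<in>S. ((b j mod m) * x j) mod m) mod m" using assms(2) by simp
  also have "\<dots> = (\<Sum>j\<in>S. (b j * x j) mod m) mod m" by (simp add: mod_mult_left_eq)
  also have "\<dots> = (\<Sum>j\<in>S. b j * x j) mod m" by (simp add: mod_sum_eq)
  finally show ?thesis .
qed

lemma Fm_inv: assumes "\<forall>j::6. Fm (w *v axis j 1) = Fm (axis j 1)" shows "Fm (w *v x) = Fm x"
proof -
  have c1: "\<forall>j\<in>UNIV. w$3$j mod 3 = (axis j 1 $ 3) mod 3"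
  proof
    fix j :: 6
    have "Fm (w *v axis j 1) = Fm (axis j 1)" using assms by blast
    then show "w$3$j mod 3 = (axis j 1 $ 3) mod 3" by (simp only: Fm_def f1_def mv_axis prod.inject)
  qed
  have c2: "\<forall>j\<in>UNIV. (w$0$j + w$1$j + w$2$j + w$4$j + w$5$j) mod 3
       = (axis j 1 $ 0 + axis j 1 $ 1 + axis j 1 $ 2 + axis j 1 $ 4 + axis j 1 $ 5) mod 3"
  proof
    fix j :: 6
    have "Fm (w *v axis j 1) = Fm (axis j 1)" using assms by blast
    then show "(w$0$j + w$1$j + w$2$j + w$4$j + w$5$j) mod 3
       = (axis j 1 $ 0 + axis j 1 $ 1 + axis j 1 $ 2 + axis j 1 $ 4 + axis j 1 $ 5) mod 3"
      by (simp only: Fm_def f2_def mv_axis prod.inject)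
  qed
  have "f1 (w *v x) = (\<Sum>j\<in>UNIV. w$3$j * x$j)" by (simp add: f1_def matrix_vector_mult_def)
  then have "f1 (w *v x) mod 3 = (\<Sum>j\<in>UNIV. (axis j 1 $ 3) * x$j) mod 3"
    using mod_lin[OF _ c1] by simp
  also have "\<dots> = f1 x mod 3" by (simp add: sum6 f1_def axis_def)
  finally have 1: "f1 (w *v x) mod 3 = f1 x mod 3" .
  have "f2 (w *v x) = (\<Sum>j\<in>UNIV. (w$0$j + w$1$j + w$2$j + w$4$j + w$5$j) * x$j)"
    by (simp add: f2_def matrix_vector_mult_def sum.distrib distrib_right)
  then have "f2 (w *v x) mod 3 = (\<Sum>j\<in>UNIV. (axis j 1 $ 0 + axis j 1 $ 1 + axis j 1 $ 2 + axis j 1 $ 4 + axis j 1 $ 5) * x$j) mod 3"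
    using mod_lin[OF _ c2] by simp
  also have "\<dots> = f2 x mod 3" by (simp add: sum6 f2_def axis_def)
  finally have 2: "f2 (w *v x) mod 3 = f2 x mod 3" .
  show ?thesis using 1 2 by (simp add: Fm_def)
qed

lemma build_prop: "p \<in> set (build n) \<Longrightarrow> length p = n \<and> (\<forall>j<n. epsl (p!j) = epsl (E6l!j))"
proof (induction n arbitrary: p)
  case 0
  then show ?case by simp
next
  case (Suc n)
  then obtain q c where q: "q \<in> set (build n)" "c \<in> set (Cand n)" "p = q @ [c]"
    by (auto simp: stepS_def)
  then show ?case using Suc.IH[OF q(1)] by (auto simp: Cand_def nth_append less_Suc_eq)
qed

lemma Words_eps: "list_all (\<lambda>ws. list_all (\<lambda>j. epsl (colsOf ws ! j) = epsl (E6l ! j)) [0..<6]) Words"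
proof -
  have "\<forall>ws\<in>set Words. colsOf ws \<in> set (build 6)"
    using final_eq unfolding final_def by (metis filter_is_subset image_eqI list.set_map subsetD)
  then show ?thesis using build_prop by (auto simp: list_all_iff)
qed

lemma final_distinct: "distinct final"
  by code_simp

lemma Words_distinct: "distinct (map colsOf Words)"
  using final_distinct final_eq by simp

lemma Words_len: "length Words = 27"
  by code_simp

lemma cl_wordmat_W: "ws \<in> set Words \<Longrightarrow> cl (wordmat ws) = colsOf ws"
  using Words_lt6 cl_wordmat by (simp add: list_all_iff)

lemma wordmat_Weps: assumes "ws \<in> set Words" shows "wordmat ws \<in> W_eps eps0"
proof -
  have e: "\<forall>j<6. epsl (colsOf ws ! j) = epsl (E6l ! j)" using Words_eps assms by (simp add: list_all_iff)
  have "\<forall>j::6. Fm (wordmat ws *v axis j 1) = Fm (axis j 1)"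
  proof
    fix j :: 6
    have "Fm (wordmat ws *v axis j 1) = epsl (cl (wordmat ws) ! idx j)"
      using forall_6[of "\<lambda>j. Fm (wordmat ws *v axis j 1) = epsl (cl (wordmat ws) ! idx j)"]
      by (simp add: Fm_epsl cl_def)
    also have "\<dots> = epsl (E6l ! idx j)" using e idx_lt6 cl_wordmat_W[OF assms] by simp
    also have "\<dots> = Fm (axis j 1)" by (simp add: Fm_epsl l6_axis_all[rule_format])
    finally show "Fm (wordmat ws *v axis j 1) = Fm (axis j 1)" .
  qed
  then show ?thesis using Fm_inv wordmat_W eps0_eq by (simp add: W_eps_def)
qed

lemma Weps_char: "W_eps eps0 = wordmat ` set Words"
proof
  show "W_eps eps0 \<subseteq> wordmat ` set Words"
  proof
    fix w assume w: "w \<in> W_eps eps0"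
    then have "cl w \<in> set (map colsOf Words)" using Weps_final final_eq by simp
    then obtain ws where ws: "ws \<in> set Words" "cl w = colsOf ws" by auto
    then have "cl w = cl (wordmat ws)" using cl_wordmat_W by simp
    then have "w = wordmat ws" by (rule cl_inj)
    then show "w \<in> wordmat ` set Words" using ws by auto
  qed
  show "wordmat ` set Words \<subseteq> W_eps eps0" using wordmat_Weps by auto
qed

lemma card_Weps: "card (W_eps eps0) = 27"
proof -
  have "inj_on wordmat (set Words)"
  proof (rule inj_onI)
    fix a b assume a: "a \<in> set Words" and b: "b \<in> set Words" and e: "wordmat a = wordmat b"
    then have "colsOf a = colsOf b" using cl_wordmat_W by metis
    then show "a = b" using Words_distinct a b by (simp add: distinct_map inj_on_def)
  qed
  moreover have "card (set Words) = 27" using Words_distinct Words_len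
    by (simp add: distinct_card distinct_map)
  ultimately show ?thesis by (simp add: Weps_char card_image)
qed

lemma finite_Weps: "finite (W_eps eps0)"
  by (simp add: Weps_char)



lemma W_mult: "a \<in> weyl_group \<Longrightarrow> b \<in> weyl_group \<Longrightarrow> a ** b \<in> weyl_group"
proof (induction rule: weyl_group.induct)
  case one
  then show ?case by simp
next
  case (step w i)
  then show ?case by (metis matrix_mul_assoc weyl_group.step)
qed

lemma refl_W: "simple_refl i \<in> weyl_group"
  using weyl_group.step[OF weyl_group.one, of i] by simp

lemma refl_sq_list: "list_all (\<lambda>k. map (lrefl k) (map (lrefl k) E6l) = E6l) [0..<6]"
  by code_simp

lemma refl_sq: "simple_refl i ** simple_refl i = mat 1"
proof (rule cl_inj)
  have "cl (simple_refl i) = map (lrefl (idx i)) E6l"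
    using cl_step[of i "mat 1"] by (simp add: cl_one)
  then show "cl (simple_refl i ** simple_refl i) = cl (mat 1)"
    using refl_sq_list idx_lt6[of i] by (simp add: cl_step cl_one list_all_iff)
qed

lemma W_inverse: "w \<in> weyl_group \<Longrightarrow> \<exists>v\<in>weyl_group. w ** v = mat 1 \<and> v ** w = mat 1"
proof (induction rule: weyl_group.induct)
  case one
  then show ?case using weyl_group.one by force
next
  case (step w i)
  then obtain v where v: "v \<in> weyl_group" "w ** v = mat 1" "v ** w = mat 1" by blast
  have "v ** simple_refl i \<in> weyl_group" using W_mult[OF v(1) refl_W] .
  moreover have "(simple_refl i ** w) ** (v ** simple_refl i) = mat 1"
    by (metis matrix_mul_assoc matrix_mul_lid v(2) refl_sq)
  moreover have "(v ** simple_refl i) ** (simple_refl i ** w) = mat 1"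
    by (metis matrix_mul_assoc matrix_mul_lid v(3) refl_sq)
  ultimately show ?case by blast
qed

lemma Weps_mult: "a \<in> W_eps eps0 \<Longrightarrow> b \<in> W_eps eps0 \<Longrightarrow> a ** b \<in> W_eps eps0"
  by (auto simp: W_eps_def W_mult matrix_vector_mul_assoc[symmetric])

lemma Weps_inverse: "a \<in> W_eps eps0 \<Longrightarrow> \<exists>b\<in>W_eps eps0. a ** b = mat 1 \<and> b ** a = mat 1"
proof -
  assume a: "a \<in> W_eps eps0"
  then obtain v where v: "v \<in> weyl_group" "a ** v = mat 1" "v ** a = mat 1"
    using W_inverse by (auto simp: W_eps_def)
  have "\<forall>x. eps0 (v *v x) = eps0 x"
  proof
    fix x
    have "eps0 (v *v x) = eps0 (a *v (v *v x))" using a by (simp add: W_eps_def)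
    also have "\<dots> = eps0 x" by (simp add: matrix_vector_mul_assoc v(2))
    finally show "eps0 (v *v x) = eps0 x" .
  qed
  then show ?thesis using v by (auto simp: W_eps_def)
qed

lemma one_Weps: "mat 1 \<in> W_eps eps0"
  by (simp add: W_eps_def weyl_group.one)

lemma Weps_subgroup: "is_subgroup (W_eps eps0) (W_eps eps0)"
  unfolding is_subgroup_def using one_Weps Weps_mult Weps_inverse by blast

lemma mult27: "multiplicity (3::nat) 27 = 3"
  using multiplicity_same_power[of "3::nat" 3] by simp

lemma sylow_Weps: "sylow 3 (W_eps eps0) (W_eps eps0)"
  unfolding sylow_def using Weps_subgroup card_Weps mult27 by simp

lemma sylow_unique: assumes "sylow 3 (W_eps eps0) P" shows "P = W_eps eps0"
proof -
  have sub: "P \<subseteq> W_eps eps0" using assms by (simp add: sylow_def is_subgroup_def)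
  have "card P = 3 ^ multiplicity 3 (card (W_eps eps0))" using assms by (simp add: sylow_def)
  then have "card P = card (W_eps eps0)" using card_Weps mult27 by simp
  then show ?thesis using card_subset_eq[OF finite_Weps sub] by simp
qed


lemma wordmat_append: "wordmat (a @ b) = wordmat a ** wordmat b"
  by (induction a) (simp_all add: matrix_mul_assoc)
lemma mv_cl: "(w *v x)$k = (\<Sum>j\<in>UNIV. cl w ! idx j ! idx k * x$j)"
  by (simp add: matrix_vector_mult_def entry[of w k])

lemma Words_nth: "i < 27 \<Longrightarrow> Words ! i \<in> set Words"
  using Words_len by simp

definition Zm :: "int^6^6" where "Zm = wordmat (Words ! 3)"

lemma cols_Zm: "colsOf (Words ! 3) = [[-1,0,-1,0,0,0],[-1,-2,-2,-3,-2,-1],[1,0,0,0,0,0],[0,1,1,1,1,0],[0,0,0,0,0,1],[0,0,0,0,-1,-1]]"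
  by code_simp

lemma cl_Zm: "cl Zm = [[-1,0,-1,0,0,0],[-1,-2,-2,-3,-2,-1],[1,0,0,0,0,0],[0,1,1,1,1,0],[0,0,0,0,0,1],[0,0,0,0,-1,-1]]"
  unfolding Zm_def using cl_wordmat_W[OF Words_nth[of 3]] cols_Zm by simp

lemma Zm_Weps: "Zm \<in> W_eps eps0"
  unfolding Zm_def by (rule wordmat_Weps[OF Words_nth]) simp

definition Z2m :: "int^6^6" where "Z2m = wordmat (Words ! 17)"

lemma cols_Z2m: "colsOf (Words ! 17) = [[0,0,1,0,0,0],[1,1,2,3,2,1],[-1,0,-1,0,0,0],[0,-1,-1,-2,-1,0],[0,0,0,0,-1,-1],[0,0,0,0,1,0]]"
  by code_simp

lemma cl_Z2m: "cl Z2m = [[0,0,1,0,0,0],[1,1,2,3,2,1],[-1,0,-1,0,0,0],[0,-1,-1,-2,-1,0],[0,0,0,0,-1,-1],[0,0,0,0,1,0]]"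
  unfolding Z2m_def using cl_wordmat_W[OF Words_nth[of 17]] cols_Z2m by simp

lemma Z2m_Weps: "Z2m \<in> W_eps eps0"
  unfolding Z2m_def by (rule wordmat_Weps[OF Words_nth]) simp

definition G1m :: "int^6^6" where "G1m = wordmat (Words ! 4)"

lemma cols_G1m: "colsOf (Words ! 4) = [[-1,0,-1,0,0,0],[0,1,0,0,0,0],[1,0,0,0,0,0],[0,0,1,1,1,1],[0,0,0,0,-1,-1],[0,0,0,0,1,0]]"
  by code_simp

lemma cl_G1m: "cl G1m = [[-1,0,-1,0,0,0],[0,1,0,0,0,0],[1,0,0,0,0,0],[0,0,1,1,1,1],[0,0,0,0,-1,-1],[0,0,0,0,1,0]]"
  unfolding G1m_def using cl_wordmat_W[OF Words_nth[of 4]] cols_G1m by simp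

lemma G1m_Weps: "G1m \<in> W_eps eps0"
  unfolding G1m_def by (rule wordmat_Weps[OF Words_nth]) simp

definition G2m :: "int^6^6" where "G2m = wordmat (Words ! 11)"

lemma cols_G2m: "colsOf (Words ! 11) = [[0,0,0,0,0,1],[1,0,0,0,0,0],[0,0,0,0,1,0],[-1,-1,-1,-2,-2,-1],[1,1,2,3,2,1],[0,1,0,0,0,0]]"
  by code_simp

lemma cl_G2m: "cl G2m = [[0,0,0,0,0,1],[1,0,0,0,0,0],[0,0,0,0,1,0],[-1,-1,-1,-2,-2,-1],[1,1,2,3,2,1],[0,1,0,0,0,0]]"
  unfolding G2m_def using cl_wordmat_W[OF Words_nth[of 11]] cols_G2m by simp

lemma G2m_Weps: "G2m \<in> W_eps eps0"
  unfolding G2m_def by (rule wordmat_Weps[OF Words_nth]) simp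

lemma fpZ: assumes "Zm *v x = x" shows "x = (0::int^6)"
proof -
  have "\<forall>k. (Zm *v x)$k = (x)$k" using assms(1) by simp
  have H0: "\<forall>k. (Zm *v x)$k = (x)$k" using assms(1) by simp
  note H = H0
  have E: "x$0 = 0 \<and> x$1 = 0 \<and> x$2 = 0 \<and> x$3 = 0 \<and> x$4 = 0 \<and> x$5 = 0"
    using H unfolding forall_6 mv_cl cl_Zm sum6 by (simp; (elim conjE, intro conjI; linarith))
  then show ?thesis unfolding vec_eq_iff forall_6 by simp
qed

lemma fpZ2: assumes "Z2m *v x = x" shows "x = (0::int^6)"
proof -
  have "\<forall>k. (Z2m *v x)$k = (x)$k" using assms(1) by simp
  have H0: "\<forall>k. (Z2m *v x)$k = (x)$k" using assms(1) by simp
  note H = H0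
  have E: "x$0 = 0 \<and> x$1 = 0 \<and> x$2 = 0 \<and> x$3 = 0 \<and> x$4 = 0 \<and> x$5 = 0"
    using H unfolding forall_6 mv_cl cl_Z2m sum6 by (simp; (elim conjE, intro conjI; linarith))
  then show ?thesis unfolding vec_eq_iff forall_6 by simp
qed

lemma fpZZ2: assumes "Zm *v x = Z2m *v x" shows "x = (0::int^6)"
proof -
  have "\<forall>k. (Zm *v x)$k = (Z2m *v x)$k" using assms(1) by simp
  have H0: "\<forall>k. (Zm *v x)$k = (Z2m *v x)$k" using assms(1) by simp
  note H = H0
  have E: "x$0 = 0 \<and> x$1 = 0 \<and> x$2 = 0 \<and> x$3 = 0 \<and> x$4 = 0 \<and> x$5 = 0"
    using H unfolding forall_6 mv_cl cl_Z2m cl_Zm sum6 by (simp; (elim conjE, intro conjI; linarith))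
  then show ?thesis unfolding vec_eq_iff forall_6 by simp
qed

lemma sysG_0_0: assumes "G1m *v x = x" "G2m *v x = x" shows "x = (0::int^6)"
proof -
  have "\<forall>k. (G1m *v x)$k = (x)$k" using assms(1) by simp
  have H0: "\<forall>k. (G1m *v x)$k = (x)$k" using assms(1) by simp
  have H1: "\<forall>k. (G2m *v x)$k = (x)$k" using assms(2) by simp
  note H = H0 H1
  have E: "x$0 = 0 \<and> x$1 = 0 \<and> x$2 = 0 \<and> x$3 = 0 \<and> x$4 = 0 \<and> x$5 = 0"
    using H unfolding forall_6 mv_cl cl_G1m cl_G2m sum6 by (simp; (elim conjE, intro conjI; linarith))
  then show ?thesis unfolding vec_eq_iff forall_6 by simp
qed

lemma sysG_0_1: assumes "G1m *v x = x" "G2m *v x = Zm *v x" shows "x = (0::int^6)"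
proof -
  have "\<forall>k. (G1m *v x)$k = (x)$k" using assms(1) by simp
  have H0: "\<forall>k. (G1m *v x)$k = (x)$k" using assms(1) by simp
  have H1: "\<forall>k. (G2m *v x)$k = (Zm *v x)$k" using assms(2) by simp
  note H = H0 H1
  have E: "x$0 = 0 \<and> x$1 = 0 \<and> x$2 = 0 \<and> x$3 = 0 \<and> x$4 = 0 \<and> x$5 = 0"
    using H unfolding forall_6 mv_cl cl_G1m cl_G2m cl_Zm sum6 by (simp; (elim conjE, intro conjI; linarith))
  then show ?thesis unfolding vec_eq_iff forall_6 by simp
qed

lemma sysG_0_2: assumes "G1m *v x = x" "G2m *v x = Z2m *v x" shows "x = (0::int^6)"
proof -
  have "\<forall>k. (G1m *v x)$k = (x)$k" using assms(1) by simp
  have H0: "\<forall>k. (G1m *v x)$k = (x)$k" using assms(1) by simp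
  have H1: "\<forall>k. (G2m *v x)$k = (Z2m *v x)$k" using assms(2) by simp
  note H = H0 H1
  have E: "x$0 = 0 \<and> x$1 = 0 \<and> x$2 = 0 \<and> x$3 = 0 \<and> x$4 = 0 \<and> x$5 = 0"
    using H unfolding forall_6 mv_cl cl_G1m cl_G2m cl_Z2m sum6 by (simp; (elim conjE, intro conjI; linarith))
  then show ?thesis unfolding vec_eq_iff forall_6 by simp
qed

lemma sysG_1_0: assumes "G1m *v x = Zm *v x" "G2m *v x = x" shows "x = (0::int^6)"
proof -
  have "\<forall>k. (G1m *v x)$k = (Zm *v x)$k" using assms(1) by simp
  have H0: "\<forall>k. (G1m *v x)$k = (Zm *v x)$k" using assms(1) by simp
  have H1: "\<forall>k. (G2m *v x)$k = (x)$k" using assms(2) by simp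
  note H = H0 H1
  have E: "x$0 = 0 \<and> x$1 = 0 \<and> x$2 = 0 \<and> x$3 = 0 \<and> x$4 = 0 \<and> x$5 = 0"
    using H unfolding forall_6 mv_cl cl_G1m cl_G2m cl_Zm sum6 by (simp; (elim conjE, intro conjI; linarith))
  then show ?thesis unfolding vec_eq_iff forall_6 by simp
qed

lemma sysG_1_1: assumes "G1m *v x = Zm *v x" "G2m *v x = Zm *v x" shows "x = (0::int^6)"
proof -
  have "\<forall>k. (G1m *v x)$k = (Zm *v x)$k" using assms(1) by simp
  have H0: "\<forall>k. (G1m *v x)$k = (Zm *v x)$k" using assms(1) by simp
  have H1: "\<forall>k. (G2m *v x)$k = (Zm *v x)$k" using assms(2) by simp
  note H = H0 H1
  have E: "x$0 = 0 \<and> x$1 = 0 \<and> x$2 = 0 \<and> x$3 = 0 \<and> x$4 = 0 \<and> x$5 = 0"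
    using H unfolding forall_6 mv_cl cl_G1m cl_G2m cl_Zm sum6 by (simp; (elim conjE, intro conjI; linarith))
  then show ?thesis unfolding vec_eq_iff forall_6 by simp
qed

lemma sysG_1_2: assumes "G1m *v x = Zm *v x" "G2m *v x = Z2m *v x" shows "x = (0::int^6)"
proof -
  have "\<forall>k. (G1m *v x)$k = (Zm *v x)$k" using assms(1) by simp
  have H0: "\<forall>k. (G1m *v x)$k = (Zm *v x)$k" using assms(1) by simp
  have H1: "\<forall>k. (G2m *v x)$k = (Z2m *v x)$k" using assms(2) by simp
  note H = H0 H1
  have E: "x$0 = 0 \<and> x$1 = 0 \<and> x$2 = 0 \<and> x$3 = 0 \<and> x$4 = 0 \<and> x$5 = 0"
    using H unfolding forall_6 mv_cl cl_G1m cl_G2m cl_Z2m cl_Zm sum6 by (simp; (elim conjE, intro conjI; linarith))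
  then show ?thesis unfolding vec_eq_iff forall_6 by simp
qed

lemma sysG_2_0: assumes "G1m *v x = Z2m *v x" "G2m *v x = x" shows "x = (0::int^6)"
proof -
  have "\<forall>k. (G1m *v x)$k = (Z2m *v x)$k" using assms(1) by simp
  have H0: "\<forall>k. (G1m *v x)$k = (Z2m *v x)$k" using assms(1) by simp
  have H1: "\<forall>k. (G2m *v x)$k = (x)$k" using assms(2) by simp
  note H = H0 H1
  have E: "x$0 = 0 \<and> x$1 = 0 \<and> x$2 = 0 \<and> x$3 = 0 \<and> x$4 = 0 \<and> x$5 = 0"
    using H unfolding forall_6 mv_cl cl_G1m cl_G2m cl_Z2m sum6 by (simp; (elim conjE, intro conjI; linarith))
  then show ?thesis unfolding vec_eq_iff forall_6 by simp
qed

lemma sysG_2_1: assumes "G1m *v x = Z2m *v x" "G2m *v x = Zm *v x" shows "x = (0::int^6)"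
proof -
  have "\<forall>k. (G1m *v x)$k = (Z2m *v x)$k" using assms(1) by simp
  have H0: "\<forall>k. (G1m *v x)$k = (Z2m *v x)$k" using assms(1) by simp
  have H1: "\<forall>k. (G2m *v x)$k = (Zm *v x)$k" using assms(2) by simp
  note H = H0 H1
  have E: "x$0 = 0 \<and> x$1 = 0 \<and> x$2 = 0 \<and> x$3 = 0 \<and> x$4 = 0 \<and> x$5 = 0"
    using H unfolding forall_6 mv_cl cl_G1m cl_G2m cl_Z2m cl_Zm sum6 by (simp; (elim conjE, intro conjI; linarith))
  then show ?thesis unfolding vec_eq_iff forall_6 by simp
qed

lemma sysG_2_2: assumes "G1m *v x = Z2m *v x" "G2m *v x = Z2m *v x" shows "x = (0::int^6)"
proof -
  have "\<forall>k. (G1m *v x)$k = (Z2m *v x)$k" using assms(1) by simp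
  have H0: "\<forall>k. (G1m *v x)$k = (Z2m *v x)$k" using assms(1) by simp
  have H1: "\<forall>k. (G2m *v x)$k = (Z2m *v x)$k" using assms(2) by simp
  note H = H0 H1
  have E: "x$0 = 0 \<and> x$1 = 0 \<and> x$2 = 0 \<and> x$3 = 0 \<and> x$4 = 0 \<and> x$5 = 0"
    using H unfolding forall_6 mv_cl cl_G1m cl_G2m cl_Z2m sum6 by (simp; (elim conjE, intro conjI; linarith))
  then show ?thesis unfolding vec_eq_iff forall_6 by simp
qed

lemma prod_words:
  assumes "list_all (\<lambda>i. i < 6) (a @ b)" "list_all (\<lambda>i. i < 6) c" "colsOf (a @ b) = colsOf c"
  shows "wordmat a ** wordmat b = wordmat c"
proof (rule cl_inj)
  show "cl (wordmat a ** wordmat b) = cl (wordmat c)"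
    using cl_wordmat[OF assms(1)] cl_wordmat[OF assms(2)] assms(3) by (simp add: wordmat_append)
qed

lemma prod_words1:
  assumes "list_all (\<lambda>i. i < 6) (a @ b)" "colsOf (a @ b) = E6l"
  shows "wordmat a ** wordmat b = mat 1"
proof (rule cl_inj)
  show "cl (wordmat a ** wordmat b) = cl (mat 1)"
    using cl_wordmat[OF assms(1)] assms(2) by (simp add: wordmat_append cl_one)
qed

lemma ZZ: "Zm ** Zm = Z2m"
  unfolding Zm_def Z2m_def by (rule prod_words) code_simp+

lemma Z2Z2: "Z2m ** Z2m = Zm"
  unfolding Zm_def Z2m_def by (rule prod_words) code_simp+

lemma ZZ2: "Zm ** Z2m = mat 1"
  unfolding Zm_def Z2m_def by (rule prod_words1) code_simp+

lemma Z2Z: "Z2m ** Zm = mat 1"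
  unfolding Zm_def Z2m_def by (rule prod_words1) code_simp+

lemma Fm_Weps: "g \<in> W_eps eps0 \<Longrightarrow> Fm (g *v v) = Fm v"
  using eps0_eq by (simp add: W_eps_def)

definition orb :: "int^6 \<Rightarrow> (int^6) set" where
  "orb x = (\<lambda>g. g *v x) ` W_eps eps0"

lemma orb_finite: "finite (orb x)"
  by (simp add: orb_def finite_Weps)

lemma orb_closed: "g \<in> W_eps eps0 \<Longrightarrow> g *v x \<in> orb x"
  by (simp add: orb_def)

lemma Weps_inj: "g \<in> W_eps eps0 \<Longrightarrow> g *v x = 0 \<Longrightarrow> x = 0"
proof -
  assume g: "g \<in> W_eps eps0" and "g *v x = 0"
  obtain h where "h ** g = mat 1" using Weps_inverse[OF g] by blast
  then have "x = h *v (g *v x)" by (simp add: matrix_vector_mul_assoc)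
  then show "x = 0" using \<open>g *v x = 0\<close> by simp
qed

lemma O3: assumes "v \<noteq> 0" shows "card {v, Zm *v v, Z2m *v v} = 3"
proof -
  have "v \<noteq> Zm *v v" using fpZ assms by metis
  moreover have "v \<noteq> Z2m *v v" using fpZ2 assms by metis
  moreover have "Zm *v v \<noteq> Z2m *v v" using fpZZ2 assms by metis
  ultimately show ?thesis by simp
qed

lemma orb_ge6: assumes x: "x \<noteq> 0" shows "6 \<le> card (orb x)"
proof -
  let ?O = "\<lambda>v. {v, Zm *v v, Z2m *v v}"
  have "\<exists>g\<in>{G1m, G2m}. g *v x \<notin> ?O x"
  proof (rule ccontr)
    assume "\<not> ?thesis"
    then have a: "G1m *v x \<in> ?O x" and b: "G2m *v x \<in> ?O x" by auto
    from a b show False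
      using x sysG_0_0 sysG_0_1 sysG_0_2 sysG_1_0 sysG_1_1 sysG_1_2 sysG_2_0 sysG_2_1 sysG_2_2
      by auto
  qed
  then obtain g where g: "g \<in> W_eps eps0" "g *v x \<notin> ?O x"
    using G1m_Weps G2m_Weps by auto
  define y where "y = g *v x"
  have y0: "y \<noteq> 0" using Weps_inj[OF g(1), of x] x unfolding y_def by blast
  have yO: "y \<notin> ?O x" using g(2) y_def by simp
  have disj: "?O x \<inter> ?O y = {}"
  proof (rule ccontr)
    assume "?O x \<inter> ?O y \<noteq> {}"
    then obtain u where u: "u \<in> ?O x \<inter> ?O y" by blast
    have "y \<in> ?O x"
    proof -
      have Zy: "Zm *v v = w \<Longrightarrow> v = Z2m *v w" for v w
        by (metis Z2Z matrix_vector_mul_assoc matrix_vector_mul_lid)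
      have Z2y: "Z2m *v v = w \<Longrightarrow> v = Zm *v w" for v w
        by (metis ZZ2 matrix_vector_mul_assoc matrix_vector_mul_lid)
      have zz: "Z2m *v (Zm *v v) = v" "Zm *v (Z2m *v v) = v" "Z2m *v (Z2m *v v) = Zm *v v"
        "Zm *v (Zm *v v) = Z2m *v v" for v
        by (simp_all add: matrix_vector_mul_assoc Z2Z ZZ2 Z2Z2 ZZ)
      have "u = y \<or> u = Zm *v y \<or> u = Z2m *v y" using u by blast
      then have uy: "y = u \<or> y = Z2m *v u \<or> y = Zm *v u"
        by (elim disjE) (simp_all add: zz)
      have ux: "u = x \<or> u = Zm *v x \<or> u = Z2m *v x" using u by blast
      from uy ux show "y \<in> ?O x"
        by (elim disjE) (simp_all add: zz)
    qed
    then show False using yO by blast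
  qed
  have sub: "?O x \<union> ?O y \<subseteq> orb x"
  proof -
    have "x \<in> orb x" using orb_closed[OF one_Weps] by simp
    moreover have "Zm *v x \<in> orb x" using orb_closed[OF Zm_Weps] .
    moreover have "Z2m *v x \<in> orb x" using orb_closed[OF Z2m_Weps] .
    moreover have "y \<in> orb x" using orb_closed[OF g(1)] y_def by simp
    moreover have "Zm *v y \<in> orb x"
      using orb_closed[OF Weps_mult[OF Zm_Weps g(1)]] y_def by (simp add: matrix_vector_mul_assoc)
    moreover have "Z2m *v y \<in> orb x"
      using orb_closed[OF Weps_mult[OF Z2m_Weps g(1)]] y_def by (simp add: matrix_vector_mul_assoc)
    ultimately show ?thesis by auto
  qed
  have "card (?O x \<union> ?O y) = 6"
    using card_Un_disjoint[OF _ _ disj] O3[OF x] O3[OF y0] by simp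
  then show ?thesis using card_mono[OF orb_finite sub] by simp
qed

lemma smult_sum: "k *s (\<Sum>a\<in>A. f a) = (\<Sum>a\<in>A. k *s f a :: int^'n)"
  by (simp add: vec_eq_iff sum_distrib_left)

lemma sum_const_vec: "(\<Sum>K\<in>C. x) = int (card C) *s (x :: int^'n)"
unfolding vec_eq_iff
proof (intro allI)
  fix i
  have "(\<Sum>K\<in>C. x) $ i = (\<Sum>K\<in>C. x $ i)" by (rule sum_component)
  then show "(\<Sum>K\<in>C. x) $ i = (int (card C) *s x) $ i" by simp
qed

lemma gen_zero: "0 \<in> gen_subgroup A"
  unfolding gen_subgroup_def by (rule CollectI, rule exI[of _ "\<lambda>_. 0"]) simp

lemma gen_add: "u \<in> gen_subgroup A \<Longrightarrow> v \<in> gen_subgroup A \<Longrightarrow> u + v \<in> gen_subgroup A"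
proof -
  assume "u \<in> gen_subgroup A" "v \<in> gen_subgroup A"
  then obtain c d where "u = (\<Sum>a\<in>A. c a *s a)" "v = (\<Sum>a\<in>A. d a *s a)" by (auto simp: gen_subgroup_def)
  then have e: "u + v = (\<Sum>a\<in>A. (c a + d a) *s a)" by (simp add: sum.distrib vector_sadd_rdistrib)
  show ?thesis unfolding gen_subgroup_def mem_Collect_eq
    by (intro exI[where x="\<lambda>a. c a + d a"]) (simp only: e)
qed

lemma gen_smult: "u \<in> gen_subgroup A \<Longrightarrow> k *s u \<in> gen_subgroup A"
proof -
  assume "u \<in> gen_subgroup A"
  then obtain c where "u = (\<Sum>a\<in>A. c a *s a)" by (auto simp: gen_subgroup_def)
  then have e: "k *s u = (\<Sum>a\<in>A. (k * c a) *s a)" by (simp add: smult_sum vector_smult_assoc)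
  show ?thesis unfolding gen_subgroup_def mem_Collect_eq
    by (intro exI[where x="\<lambda>a. k * c a"]) (simp only: e)
qed

lemma gen_sum: "finite F \<Longrightarrow> (\<forall>K\<in>F. d K \<in> gen_subgroup A) \<Longrightarrow> sum d F \<in> gen_subgroup A"
  by (induction F rule: finite_induct) (auto intro: gen_zero gen_add)

lemma coset_mult:
  fixes L :: "(int^'n) set"
  assumes L: "L = gen_subgroup A" and fin: "finite (cosets L)"
  shows "int (card (cosets L)) *s x \<in> L"
proof -
  define C where "C = cosets L"
  define rep where "rep K = (SOME y. K = (+) y ` L)" for K
  have rep: "K = (+) (rep K) ` L" if "K \<in> C" for K
  proof -
    from that obtain y where "K = (+) y ` L" by (auto simp: C_def cosets_def)
    then show ?thesis unfolding rep_def by (rule someI)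
  qed
  define tau where "tau K = (+) x ` K" for K
  have tauC_gen: "tau ((+) y ` L) = (+) (x + y) ` L" for y
    by (simp add: tau_def image_image add.assoc)
  have tauC: "tau K = (+) (x + rep K) ` L" if "K \<in> C" for K
  proof -
    have "tau K = tau ((+) (rep K) ` L)" using rep[OF that] by (rule arg_cong)
    then show ?thesis using tauC_gen by simp
  qed
  have tau_in: "tau K \<in> C" if "K \<in> C" for K
    using tauC[OF that] by (auto simp: C_def cosets_def)
  define tau' where "tau' K = (+) (-x) ` K" for K
  have tau'_in: "tau' K \<in> C" if "K \<in> C" for K
  proof -
    have "tau' K = (\<lambda>y. -x + y) ` ((+) (rep K) ` L)" using rep[OF that] unfolding tau'_def by (rule arg_cong)
    also have "\<dots> = (+) (-x + rep K) ` L" unfolding image_image by (rule image_cong) (simp_all add: add.assoc)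
    finally have "tau' K = (+) (-x + rep K) ` L" .
    then show ?thesis by (auto simp: C_def cosets_def)
  qed
  have bij: "bij_betw tau C C"
  proof (rule bij_betw_byWitness[where f'=tau'])
    show "\<forall>a\<in>C. tau' (tau a) = a" by (simp add: tau_def tau'_def image_image)
    show "\<forall>a'\<in>C. tau (tau' a') = a'" by (simp add: tau_def tau'_def image_image)
    show "tau ` C \<subseteq> C" using tau_in by auto
    show "tau' ` C \<subseteq> C" using tau'_in by auto
  qed
  have d: "rep (tau K) - (x + rep K) \<in> L" if KC: "K \<in> C" for K
  proof -
    have "rep (tau K) + 0 \<in> (+) (rep (tau K)) ` L" using gen_zero L by blast
    then have "rep (tau K) \<in> tau K" using rep[OF tau_in[OF KC]] by simp
    then obtain l where "l \<in> L" "rep (tau K) = x + rep K + l" using tauC[OF KC] by auto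
    then show ?thesis by simp
  qed
  have "(\<Sum>K\<in>C. rep (tau K) - (x + rep K)) \<in> L"
    using gen_sum[of C "\<lambda>K. rep (tau K) - (x + rep K)" A] d L fin C_def by auto
  moreover have "(\<Sum>K\<in>C. rep (tau K) - (x + rep K)) = - (int (card C) *s x)"
  proof -
    have "(\<Sum>K\<in>C. rep (tau K)) = (\<Sum>K\<in>C. rep K)" using sum.reindex_bij_betw[OF bij] .
    then show ?thesis by (simp add: sum_subtractf sum.distrib sum_const_vec del: sum_constant)
  qed
  ultimately have "- (int (card C) *s x) \<in> L" by simp
  then have "(-1) *s (- (int (card C) *s x)) \<in> L" using gen_smult L by blast
  moreover have "(-1) *s (- (int (card C) *s x)) = int (card C) *s x" by (simp add: vec_eq_iff)
  ultimately show ?thesis by (simp add: C_def)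
qed

lemma index_decomp:
  assumes fi: "finite_index_prime_to 3 (gen_subgroup A)"
  shows "\<exists>l\<in>gen_subgroup A. \<exists>y. x = l + 3 *s y"
proof -
  let ?L = "gen_subgroup A"
  define n where "n = card (cosets ?L)"
  have fin: "finite (cosets ?L)" and nd: "\<not> 3 dvd n" using fi by (auto simp: finite_index_prime_to_def n_def)
  have "int n mod 3 = 1 \<or> int n mod 3 = 2" using nd by presburger
  moreover have "(int n * int n) mod 3 = ((int n mod 3) * (int n mod 3)) mod 3" by (rule mod_mult_eq[symmetric])
  ultimately have "(int n * int n) mod 3 = 1" by auto
  define k where "k = (int n * int n) div 3"
  have k: "int n * int n = 3 * k + 1"
    using div_mult_mod_eq[of "int n * int n" 3] \<open>(int n * int n) mod 3 = 1\<close> unfolding k_def by linarith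
  have l: "int n *s (int n *s x) \<in> ?L" using coset_mult[OF refl fin, of x] gen_smult n_def by blast
  have "x = int n *s (int n *s x) + 3 *s (- (k *s x))"
  proof -
    have "\<forall>i. int n * (int n * x$i) = (3 * k + 1) * x$i" by (simp add: k[symmetric] mult.assoc)
    then show ?thesis by (simp add: vec_eq_iff algebra_simps)
  qed
  then show ?thesis using l by blast
qed

lemma f1_lin: "f1 ((\<Sum>a\<in>A. c a *s a) + 3 *s y) = (\<Sum>a\<in>A. c a * f1 a) + 3 * f1 y"
  by (simp add: f1_def)

lemma f2_lin: "f2 ((\<Sum>a\<in>A. c a *s a) + 3 *s y) = (\<Sum>a\<in>A. c a * f2 a) + 3 * f2 y"
  by (simp add: f2_def sum.distrib[symmetric] distrib_left algebra_simps)

lemma mod_lin':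
  fixes a b c :: "'i \<Rightarrow> int"
  assumes "finite S" "\<forall>j\<in>S. a j mod m = b j mod m"
  shows "(\<Sum>j\<in>S. c j * a j) mod m = (\<Sum>j\<in>S. c j * b j) mod m"
  using mod_lin[OF assms, of c] by (simp add: mult.commute)

lemma Fm_zero: "Fm 0 = (0,0)"
  by (simp add: Fm_def f1_def f2_def)

lemma rank_bound: assumes "invariant_gen_set 3 (W_eps eps0) A" shows "12 \<le> card A"
proof -
  have finA: "finite A" and invA: "\<forall>w\<in>W_eps eps0. \<forall>a\<in>A. w *v a \<in> A"
    and fi: "finite_index_prime_to 3 (gen_subgroup A)"
    using assms by (auto simp: invariant_gen_set_def)
  have modf: "\<exists>c. f1 x mod 3 = (\<Sum>a\<in>A. c a * f1 a) mod 3 \<and> f2 x mod 3 = (\<Sum>a\<in>A. c a * f2 a) mod 3" for x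
  proof -
    obtain l y where l: "l \<in> gen_subgroup A" "x = l + 3 *s y" using index_decomp[OF fi] by blast
    obtain c where c: "l = (\<Sum>a\<in>A. c a *s a)" using l(1) by (auto simp: gen_subgroup_def)
    have "f1 x = (\<Sum>a\<in>A. c a * f1 a) + 3 * f1 y" using l(2) c f1_lin by simp
    moreover have "f2 x = (\<Sum>a\<in>A. c a * f2 a) + 3 * f2 y" using l(2) c f2_lin by simp
    ultimately show ?thesis by auto
  qed
  have f_axis: "f1 (axis 3 1) = 1" "f2 (axis 3 1) = 0" "f1 (axis 0 1) = 0" "f2 (axis 0 1) = 1"
    by (simp_all add: f1_def f2_def axis_def)
  obtain a where a: "a \<in> A" "Fm a \<noteq> (0,0)"
  proof (rule ccontr)
    assume "\<not> thesis"
    then have z: "\<forall>b\<in>A. f1 b mod 3 = 0 mod 3" using that by (auto simp: Fm_def)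
    obtain c where "f1 (axis 3 1) mod 3 = (\<Sum>a\<in>A. c a * f1 a) mod 3" using modf by blast
    also have "\<dots> = (\<Sum>a\<in>A. c a * 0) mod 3" by (rule mod_lin'[OF finA z])
    finally show False using f_axis by simp
  qed
  have a0: "a \<noteq> 0" using a(2) Fm_zero by auto
  show ?thesis
  proof (cases "\<exists>b\<in>A. Fm b \<noteq> (0,0) \<and> Fm b \<noteq> Fm a")
    case True
    then obtain b where b: "b \<in> A" "Fm b \<noteq> (0,0)" "Fm b \<noteq> Fm a" by blast
    have b0: "b \<noteq> 0" using b(2) Fm_zero by auto
    have sa: "orb a \<subseteq> A" using invA a(1) by (auto simp: orb_def)
    have sb: "orb b \<subseteq> A" using invA b(1) by (auto simp: orb_def)
    have dj: "orb a \<inter> orb b = {}"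
    proof (rule ccontr)
      assume "orb a \<inter> orb b \<noteq> {}"
      then obtain g h where g: "g \<in> W_eps eps0" "h \<in> W_eps eps0" "g *v a = h *v b" by (auto simp: orb_def)
      then have "Fm a = Fm b" using Fm_Weps[OF g(1), of a] Fm_Weps[OF g(2), of b] by simp
      then show False using b(3) by simp
    qed
    have "card (orb a \<union> orb b) = card (orb a) + card (orb b)"
      by (rule card_Un_disjoint[OF orb_finite orb_finite dj])
    moreover have "card (orb a \<union> orb b) \<le> card A" using sa sb finA by (intro card_mono) auto
    ultimately show ?thesis using orb_ge6[OF a0] orb_ge6[OF b0] by simp
  next
    case False
    then have allb: "\<forall>b\<in>A. Fm b = (0,0) \<or> Fm b = Fm a" by auto
    define t where "t b = (if Fm b = (0,0) then 0 else 1 :: int)" for b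
    have t1: "\<forall>b\<in>A. f1 b mod 3 = (t b * f1 a) mod 3" using allb by (auto simp: t_def Fm_def)
    have t2: "\<forall>b\<in>A. f2 b mod 3 = (t b * f2 a) mod 3" using allb by (auto simp: t_def Fm_def)
    have key: "\<exists>s. f1 x mod 3 = (s * f1 a) mod 3 \<and> f2 x mod 3 = (s * f2 a) mod 3" for x
    proof -
      obtain c where c: "f1 x mod 3 = (\<Sum>a\<in>A. c a * f1 a) mod 3" "f2 x mod 3 = (\<Sum>a\<in>A. c a * f2 a) mod 3"
        using modf by blast
      have "f1 x mod 3 = (\<Sum>b\<in>A. c b * (t b * f1 a)) mod 3" using c(1) mod_lin'[OF finA t1] by simp
      also have "\<dots> = ((\<Sum>b\<in>A. c b * t b) * f1 a) mod 3" by (simp add: sum_distrib_right mult.assoc)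
      finally have 1: "f1 x mod 3 = ((\<Sum>b\<in>A. c b * t b) * f1 a) mod 3" .
      have "f2 x mod 3 = (\<Sum>b\<in>A. c b * (t b * f2 a)) mod 3" using c(2) mod_lin'[OF finA t2] by simp
      also have "\<dots> = ((\<Sum>b\<in>A. c b * t b) * f2 a) mod 3" by (simp add: sum_distrib_right mult.assoc)
      finally have 2: "f2 x mod 3 = ((\<Sum>b\<in>A. c b * t b) * f2 a) mod 3" .
      show ?thesis using 1 2 by blast
    qed
    obtain s where sx: "f1 (axis 3 1) mod 3 = (s * f1 a) mod 3" "f2 (axis 3 1) mod 3 = (s * f2 a) mod 3"
      using key by blast
    obtain s' where sx': "f1 (axis 0 1) mod 3 = (s' * f1 a) mod 3" "f2 (axis 0 1) mod 3 = (s' * f2 a) mod 3"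
      using key by blast
    have s1: "(s * f1 a) mod 3 = 1" using sx(1) f_axis by simp
    have s2: "(s * f2 a) mod 3 = 0" using sx(2) f_axis by simp
    have s1': "(s' * f1 a) mod 3 = 0" using sx'(1) f_axis by simp
    have s2': "(s' * f2 a) mod 3 = 1" using sx'(2) f_axis by simp
    have "((s * f1 a) * (s' * f2 a)) mod 3 = (((s * f1 a) mod 3) * ((s' * f2 a) mod 3)) mod 3"
      by (rule mod_mult_eq[symmetric])
    also have "\<dots> = (1 * 1) mod 3" by (simp only: s1 s2')
    finally have p1: "((s * f1 a) * (s' * f2 a)) mod 3 = 1" by simp
    have "((s' * f1 a) * (s * f2 a)) mod 3 = (((s' * f1 a) mod 3) * ((s * f2 a) mod 3)) mod 3"
      by (rule mod_mult_eq[symmetric])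
    also have "\<dots> = (0 * 0) mod 3" by (simp only: s1' s2)
    finally have p2: "((s' * f1 a) * (s * f2 a)) mod 3 = 0" by simp
    have eqp: "(s * f1 a) * (s' * f2 a) = (s' * f1 a) * (s * f2 a)" by (simp add: ac_simps)
    have False using p1 p2 eqp by (metis zero_neq_one)
    then show ?thesis ..
  qed
qed

definition A0 :: "(int^6) set" where
  "A0 = (\<lambda>(g, j). g *v axis j 1) ` (W_eps eps0 \<times> UNIV)"

lemma A0_inv: "invariant_gen_set 3 (W_eps eps0) A0"
proof -
  have fin: "finite A0" unfolding A0_def using finite_Weps by simp
  have inv: "\<forall>w\<in>W_eps eps0. \<forall>a\<in>A0. w *v a \<in> A0"
  proof (intro ballI)
    fix w a assume w: "w \<in> W_eps eps0" and a: "a \<in> A0"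
    then obtain g j where g: "g \<in> W_eps eps0" "a = g *v axis j 1" by (auto simp: A0_def)
    then have "w *v a = (w ** g) *v axis j 1" by (simp add: matrix_vector_mul_assoc)
    then show "w *v a \<in> A0" using Weps_mult[OF w g(1)] unfolding A0_def by auto
  qed
  have ax: "axis j 1 \<in> A0" for j
    using one_Weps unfolding A0_def by (auto intro!: image_eqI[where x="(mat 1, j)"])
  have gen: "gen_subgroup A0 = UNIV"
  proof (intro set_eqI iffI)
    fix x :: "int^6"
    define c where "c (a::int^6) = (\<Sum>j\<in>UNIV. if a = axis j 1 then x$j else 0)" for a
    have "(\<Sum>a\<in>A0. c a *s a) = (\<Sum>a\<in>A0. \<Sum>j\<in>UNIV. (if a = axis j 1 then x$j *s axis j 1 else 0))"
    proof (intro sum.cong refl)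
      fix a assume "a \<in> A0"
      have "c a *s a = (\<Sum>j\<in>UNIV. (if a = axis j 1 then x$j else 0) *s a)"
        unfolding c_def by (simp add: vec_eq_iff sum_distrib_right)
      also have "\<dots> = (\<Sum>j\<in>UNIV. if a = axis j 1 then x$j *s axis j 1 else 0)"
        by (intro sum.cong refl) (case_tac "a = axis j 1"; simp)
      finally show "c a *s a = (\<Sum>j\<in>UNIV. if a = axis j 1 then x$j *s axis j 1 else 0)" .
    qed
    also have "\<dots> = (\<Sum>j\<in>UNIV. \<Sum>a\<in>A0. (if a = axis j 1 then x$j *s axis j 1 else 0))"
      by (rule sum.swap)
    also have "\<dots> = (\<Sum>j\<in>UNIV. x$j *s axis j 1)"
      using fin ax by (simp add: sum.delta')
    also have "\<dots> = x" by (rule basis_expansion)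
    finally show "x \<in> gen_subgroup A0" unfolding gen_subgroup_def by (metis (mono_tags) mem_Collect_eq)
  qed simp
  have "cosets (UNIV :: (int^6) set) = {UNIV}"
  proof -
    have "(\<lambda>l. x + l) ` UNIV = (UNIV :: (int^6) set)" for x :: "int^6"
      by (metis add.commute diff_add_cancel surj_def)
    then show ?thesis by (auto simp: cosets_def)
  qed
  then have "finite_index_prime_to 3 (gen_subgroup A0)" by (simp add: finite_index_prime_to_def gen)
  then show ?thesis using fin inv by (simp add: invariant_gen_set_def)
qed

lemma Rank_bound: "12 \<le> Rank 3 (W_eps eps0) (W_eps eps0)"
proof -
  let ?Q = "\<lambda>n. \<exists>A :: (int^6) set. invariant_gen_set 3 (W_eps eps0) A \<and> card A = n"
  have "?Q (card A0)" using A0_inv by blast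
  then have "?Q (LEAST n. ?Q n)" by (rule LeastI)
  then obtain A where A: "invariant_gen_set 3 (W_eps eps0) A" "card A = (LEAST n. ?Q n)" by blast
  have "Rank 3 (W_eps eps0) (W_eps eps0) = (LEAST n. ?Q n)" by (simp add: Rank_def)
  then show ?thesis using rank_bound[OF A(1)] A(2) by simp
qed

lemma Rl_eps: "list_all (\<lambda>r. epsl r \<noteq> (0,0)) Rl"
  by code_simp

lemma roots_eps: "\<alpha> \<in> roots \<Longrightarrow> eps0 \<alpha> \<noteq> 0"
proof -
  assume "\<alpha> \<in> roots"
  then obtain w i where w: "w \<in> weyl_group" "\<alpha> = w *v simple_root i" by (auto simp: roots_def)
  have "cl w ! idx i = l6 (w *v axis i 1)"
    using forall_6[of "\<lambda>i. cl w ! idx i = l6 (w *v axis i 1)"] by (simp add: cl_def)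
  then have "l6 \<alpha> \<in> set Rl" using W_inv[OF w(1)] w(2) idx_lt6[of i]
    by (metis length_cl nth_mem simple_root_def subsetD)
  then have "epsl (l6 \<alpha>) \<noteq> (0,0)" using Rl_eps by (simp add: list_all_iff)
  then have "Fm \<alpha> \<noteq> Fm 0" by (simp add: Fm_epsl[symmetric] Fm_zero)
  then show "eps0 \<alpha> \<noteq> 0" using eps0_eq eps0_zero by metis
qed

lemma fixed_Weps: "fixed_pts (W_eps eps0) = {0}"
proof
  show "fixed_pts (W_eps eps0) \<subseteq> {0}"
  proof
    fix x assume "x \<in> fixed_pts (W_eps eps0)"
    then have "G1m *v x = x" "G2m *v x = x" using G1m_Weps G2m_Weps by (auto simp: fixed_pts_def)
    then show "x \<in> {0}" using sysG_0_0 by simp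
  qed
  show "{0} \<subseteq> fixed_pts (W_eps eps0)" by (simp add: fixed_pts_def)
qed

theorem proposition17p1:
  fixes k0 :: "'k::field"
  assumes "CHAR('k) \<noteq> 3"
  shows "\<exists>eps :: charlat \<Rightarrow> 3 ^ 2.
           (\<forall>x y. eps (x + y) = eps x + eps y) \<and> surj eps
         \<and> (\<forall>\<alpha>\<in>roots. eps \<alpha> \<noteq> 0)
         \<and> (\<exists>P. sylow 3 (W_eps eps) P \<and> fixed_pts P = {0})
         \<and> (\<forall>P. sylow 3 (W_eps eps) P \<longrightarrow> Rank 3 (W_eps eps) P \<ge> 12)"
proof (intro exI[of _ eps0] conjI allI ballI impI)
  show "eps0 (x + y) = eps0 x + eps0 y" for x y by (rule eps0_add)
  show "surj eps0" by (rule eps0_surj)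
  show "eps0 \<alpha> \<noteq> 0" if "\<alpha> \<in> roots" for \<alpha> using roots_eps that .
  show "\<exists>P. sylow 3 (W_eps eps0) P \<and> fixed_pts P = {0}" using sylow_Weps fixed_Weps by blast
  show "12 \<le> Rank 3 (W_eps eps0) P" if "sylow 3 (W_eps eps0) P" for P
    using sylow_unique[OF that] Rank_bound by simp
qed

end
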